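(* Let $N\in\mathbb{N}$ and let $\mathbf{X}=(X_1,\ldots,X_N)$ be a random vector with independent coordinates, with joint density $f_{\mathbf{X}}(\mathbf{x})=\prod_{i=1}^N f_i(x_i)$. Let $y$ be a real-valued function with $\mathbb{E}[y(\mathbf{X})^2]<\infty$, and let $y(\mathbf{X})=\sum_{u\subseteq\{1,\ldots,N\}} y_u(\mathbf{X}_u)$ be its ANOVA dimensional decomposition (defined in the context). Suppose there are real constants $c>0$ and $q>1$ such that $\sigma_u^2:=\mathbb{E}[y_u^2(\mathbf{X}_u)]\le c\,q^{-|u|}$ for every nonempty $u\subseteq\{1,\ldots,N\}$. For $0\le S\le N$ let $\tilde{y}_S(\mathbf{X}):=\sum_{u\subseteq\{1,\ldots,N\},\,0\le|u|\le S} y_u(\mathbf{X}_u)$. Then $$\tilde{e}_S:=\mathbb{E}\big[(y(\mathbf{X})-\tilde{y}_S(\mathbf{X}))^2\big]\le c\sum_{s=S+1}^{N}\binom{N}{s}q^{-s}.$$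
   Context: For $u\subseteq\{1,\ldots,N\}$, $\mathbf{X}_u=(X_i)_{i\in u}$ (ordered by increasing index), $-u=\{1,\ldots,N\}\setminus u$, and $f_{\mathbf{X}_{-u}}(\mathbf{x}_{-u})=\prod_{i\notin u} f_i(x_i)$. The ANOVA dimensional decomposition components are defined recursively by $y_\emptyset=\int_{\mathbb{R}^N} y(\mathbf{x})f_{\mathbf{X}}(\mathbf{x})\,d\mathbf{x}$ and, for nonempty $u$, $y_u(\mathbf{X}_u)=\int_{\mathbb{R}^{N-|u|}} y(\mathbf{X}_u,\mathbf{x}_{-u})f_{\mathbf{X}_{-u}}(\mathbf{x}_{-u})\,d\mathbf{x}_{-u}-\sum_{v\subsetneq u} y_v(\mathbf{X}_v)$; then $y(\mathbf{X})=\sum_{u\subseteq\{1,\ldots,N\}}y_u(\mathbf{X}_u)$. *)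

theory Defs
  imports "HOL-Probability.Probability"
begin

definition partial_int ::
  "nat \<Rightarrow> (nat \<Rightarrow> real measure) \<Rightarrow> ((nat \<Rightarrow> real) \<Rightarrow> real) \<Rightarrow> nat set \<Rightarrow> (nat \<Rightarrow> real) \<Rightarrow> real" where
  "partial_int N M y u x =
     integral\<^sup>L (PiM ({1..N} - u) M) (\<lambda>z. y (merge u ({1..N} - u) (x, z)))"

function anova ::
  "nat \<Rightarrow> (nat \<Rightarrow> real measure) \<Rightarrow> ((nat \<Rightarrow> real) \<Rightarrow> real) \<Rightarrow> nat set \<Rightarrow> (nat \<Rightarrow> real) \<Rightarrow> real" where
  "anova N M y u x =
     (if finite u then partial_int N M y u x - (\<Sum>v\<in>{v. v \<subset> u}. anova N M y v x) else 0)"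
  by auto
termination
  by (relation "Wellfounded.measure (\<lambda>(N, M, y, u, x). card u)")
     (auto intro: psubset_card_mono)

end

theory Submission
  imports Defs
begin

definition pint :: "nat set \<Rightarrow> (nat \<Rightarrow> real measure) \<Rightarrow> ((nat \<Rightarrow> real) \<Rightarrow> real) \<Rightarrow> nat set \<Rightarrow> (nat \<Rightarrow> real) \<Rightarrow> real" where
  "pint I M g u x = (\<integral>z. g (merge u (I - u) (x, z)) \<partial>PiM (I - u) M)"

lemma pint_restrict: "pint I M g u x = pint I M g u (restrict x u)"
  unfolding pint_def by simp

lemma pint_local: "(\<And>i. i \<in> u \<Longrightarrow> x i = x' i) \<Longrightarrow> pint I M g u x = pint I M g u x'"
  by (metis pint_restrict restrict_ext)

lemma jensen_sq:
  fixes h :: "'a \<Rightarrow> real"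
  assumes Q: "prob_space Q" and h: "h \<in> borel_measurable Q" and h2: "integrable Q (\<lambda>z. (h z)\<^sup>2)"
  shows "(integral\<^sup>L Q h)\<^sup>2 \<le> integral\<^sup>L Q (\<lambda>z. (h z)\<^sup>2)"
proof -
  interpret prob_space Q by fact
  have "integrable Q h" by (rule square_integrable_imp_integrable[OF h h2])
  then have "prob_space.variance Q h = integral\<^sup>L Q (\<lambda>z. (h z)\<^sup>2) - (integral\<^sup>L Q h)\<^sup>2"
    using variance_eq h2 by blast
  moreover have "0 \<le> prob_space.variance Q h" by (rule variance_positive)
  ultimately show ?thesis by simp
qed

definition sqi :: "'a measure \<Rightarrow> ('a \<Rightarrow> real) \<Rightarrow> bool" where
  "sqi Q f \<longleftrightarrow> f \<in> borel_measurable Q \<and> integrable Q (\<lambda>x. (f x)\<^sup>2)"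

lemma abs_mult_le_sq: "\<bar>a * b\<bar> \<le> a\<^sup>2 + (b::real)\<^sup>2"
proof -
  have "0 \<le> (\<bar>a\<bar> - \<bar>b\<bar>)\<^sup>2" by simp
  then have "2 * (\<bar>a\<bar> * \<bar>b\<bar>) \<le> a\<^sup>2 + b\<^sup>2" by (simp add: power2_eq_square algebra_simps)
  moreover have "0 \<le> \<bar>a\<bar> * \<bar>b\<bar>" by simp
  ultimately show ?thesis unfolding abs_mult by linarith
qed

lemma sqi_prod: "sqi Q f \<Longrightarrow> sqi Q g \<Longrightarrow> integrable Q (\<lambda>x. f x * g x)"
  unfolding sqi_def
  by (rule Bochner_Integration.integrable_bound[of _ "\<lambda>x. (f x)\<^sup>2 + (g x)\<^sup>2"]) (auto intro!: abs_mult_le_sq)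

lemma sqi_diff: assumes "sqi Q f" "sqi Q g" shows "sqi Q (\<lambda>x. f x - g x)"
proof -
  have e: "(\<lambda>x. (f x - g x)\<^sup>2) = (\<lambda>x. (f x)\<^sup>2 + (g x)\<^sup>2 - 2 * (f x * g x))"
    by (simp add: fun_eq_iff power2_eq_square algebra_simps)
  show ?thesis using assms sqi_prod[OF assms] unfolding sqi_def e by auto
qed

lemma sqi_add: assumes "sqi Q f" "sqi Q g" shows "sqi Q (\<lambda>x. f x + g x)"
proof -
  have e: "(\<lambda>x. (f x + g x)\<^sup>2) = (\<lambda>x. (f x)\<^sup>2 + (g x)\<^sup>2 + 2 * (f x * g x))"
    by (simp add: fun_eq_iff power2_eq_square algebra_simps)
  show ?thesis using assms sqi_prod[OF assms] unfolding sqi_def e by auto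
qed

lemma sqi_sum: assumes "finite V" "\<And>v. v \<in> V \<Longrightarrow> sqi Q (f v)" shows "sqi Q (\<lambda>x. \<Sum>v\<in>V. f v x)"
  using assms
proof (induction V rule: finite_induct)
  case empty then show ?case by (simp add: sqi_def)
next
  case (insert a V) then show ?case by (simp add: sqi_add)
qed

locale anv = product_prob_space M I for M :: "nat \<Rightarrow> real measure" and I +
  assumes finI: "finite I" and setsM: "\<And>i. sets (M i) = sets borel"
begin

lemma spaceM: "space (M i) = UNIV"
  using sets_eq_imp_space_eq[OF setsM[of i]] by simp

lemma prob_PiM: "finite J \<Longrightarrow> prob_space (PiM J M)"
  by (intro prob_spaceI) (simp add: space_PiM emeasure_PiM M.emeasure_space_1)

lemma sf_PiM: "finite J \<Longrightarrow> sigma_finite_measure (PiM J M)"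
proof -
  assume "finite J"
  interpret prob_space "PiM J M" by (rule prob_PiM) fact
  show ?thesis by unfold_locales
qed

lemma restr_integrableK:
  fixes F :: "(nat \<Rightarrow> real) \<Rightarrow> real"
  assumes K: "finite K" and J: "J \<subseteq> K" and F: "F \<in> borel_measurable (PiM J M)"
  shows "integrable (PiM K M) (\<lambda>x. F (restrict x J)) \<longleftrightarrow> integrable (PiM J M) F"
  using integrable_distr_eq[OF measurable_restrict_subset[OF J, of M] F] distr_restrict[OF J K] by simp

lemma restr_integralK:
  fixes F :: "(nat \<Rightarrow> real) \<Rightarrow> real"
  assumes K: "finite K" and J: "J \<subseteq> K" and F: "F \<in> borel_measurable (PiM J M)"
  shows "integral\<^sup>L (PiM K M) (\<lambda>x. F (restrict x J)) = integral\<^sup>L (PiM J M) F"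
  using integral_distr[OF measurable_restrict_subset[OF J, of M] F] distr_restrict[OF J K] by simp

lemma restr_integrable:
  fixes F :: "(nat \<Rightarrow> real) \<Rightarrow> real"
  assumes J: "J \<subseteq> I" and F: "F \<in> borel_measurable (PiM J M)"
  shows "integrable (PiM I M) (\<lambda>x. F (restrict x J)) \<longleftrightarrow> integrable (PiM J M) F"
  by (rule restr_integrableK[OF finI J F])

lemma restr_integral:
  fixes F :: "(nat \<Rightarrow> real) \<Rightarrow> real"
  assumes J: "J \<subseteq> I" and F: "F \<in> borel_measurable (PiM J M)"
  shows "integral\<^sup>L (PiM I M) (\<lambda>x. F (restrict x J)) = integral\<^sup>L (PiM J M) F"
  by (rule restr_integralK[OF finI J F])

lemma restr_AE:
  assumes J: "J \<subseteq> I" and A: "AE x in PiM J M. Q x"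
  shows "AE x in PiM I M. Q (restrict x J)"
  using AE_distrD[OF measurable_restrict_subset[OF J]] A distr_restrict[OF J finI] by metis

lemma merge_meas:
  assumes u: "u \<subseteq> I" and g: "g \<in> borel_measurable (PiM I M)"
  shows "(\<lambda>(x,z). g (merge u (I - u) (x, z))) \<in> borel_measurable (PiM u M \<Otimes>\<^sub>M PiM (I - u) M)"
proof -
  have "I = u \<union> (I - u)" using u by auto
  then have g': "g \<in> borel_measurable (PiM (u \<union> (I - u)) M)" using g by simp
  show ?thesis using measurable_comp[OF measurable_merge g'] by (simp add: comp_def case_prod_beta')
qed

lemma pint_meas_u:
  assumes u: "u \<subseteq> I" and g: "g \<in> borel_measurable (PiM I M)"
  shows "pint I M g u \<in> borel_measurable (PiM u M)"
proof -
  interpret S: sigma_finite_measure "PiM (I - u) M" by (rule sf_PiM) (use finI in simp)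
  show ?thesis unfolding pint_def
    by (rule S.borel_measurable_lebesgue_integral) (use merge_meas[OF u g] in simp)
qed

lemma pint_meas:
  assumes u: "u \<subseteq> I" and g: "g \<in> borel_measurable (PiM I M)"
  shows "pint I M g u \<in> borel_measurable (PiM I M)"
proof -
  have "(\<lambda>x. pint I M g u (restrict x u)) \<in> borel_measurable (PiM I M)"
    using measurable_comp[OF measurable_restrict_subset[OF u] pint_meas_u[OF u g]] by (simp add: comp_def)
  then show ?thesis by (simp flip: pint_restrict)
qed

lemma pint_fubini:
  fixes g :: "(nat \<Rightarrow> real) \<Rightarrow> real"
  assumes u: "u \<subseteq> I" and g: "integrable (PiM I M) g"
  shows "AE x in PiM I M. integrable (PiM (I - u) M) (\<lambda>z. g (merge u (I - u) (x, z)))"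
    and "integrable (PiM I M) (pint I M g u)"
    and "integral\<^sup>L (PiM I M) (pint I M g u) = integral\<^sup>L (PiM I M) g"
proof -
  have fu: "finite u" "finite (I - u)" using u finI finite_subset by auto
  have IU: "u \<union> (I - u) = I" using u by auto
  have dj: "u \<inter> (I - u) = {}" by auto
  interpret PS: pair_sigma_finite "PiM u M" "PiM (I - u) M"
    by (simp add: pair_sigma_finite_def sf_PiM fu)
  have gm: "g \<in> borel_measurable (PiM I M)" using g by auto
  have gi: "integrable (PiM (u \<union> (I - u)) M) g" using g IU by simp
  have ip: "integrable (PiM u M \<Otimes>\<^sub>M PiM (I - u) M) (\<lambda>p. g (merge u (I - u) p))"
    by (rule integrable_distr[OF measurable_merge]) (subst distr_merge[OF dj fu], rule gi)
  have ae: "AE x in PiM u M. integrable (PiM (I - u) M) (\<lambda>z. g (merge u (I - u) (x, z)))"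
    using PS.AE_integrable_fst'[OF ip] by simp
  show "AE x in PiM I M. integrable (PiM (I - u) M) (\<lambda>z. g (merge u (I - u) (x, z)))"
    using restr_AE[OF u ae] by simp
  have iu: "integrable (PiM u M) (pint I M g u)"
    using PS.integrable_fst'[OF ip] unfolding pint_def by simp
  show "integrable (PiM I M) (pint I M g u)"
    using iu restr_integrable[OF u pint_meas_u[OF u gm]] by (simp flip: pint_restrict)
  have "integral\<^sup>L (PiM I M) g = integral\<^sup>L (PiM (u \<union> (I - u)) M) g" using IU by simp
  also have "\<dots> = integral\<^sup>L (PiM u M) (pint I M g u)"
    unfolding pint_def by (rule product_integral_fold[OF dj fu gi])
  also have "\<dots> = integral\<^sup>L (PiM I M) (\<lambda>x. pint I M g u (restrict x u))"
    using restr_integral[OF u pint_meas_u[OF u gm]] by simp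
  finally show "integral\<^sup>L (PiM I M) (pint I M g u) = integral\<^sup>L (PiM I M) g"
    by (simp flip: pint_restrict)
qed

lemma pint_pullout:
  assumes k: "\<And>x x'. (\<And>i. i \<in> u \<Longrightarrow> x i = x' i) \<Longrightarrow> k x = k x'"
  shows "pint I M (\<lambda>x. h x * k x) u x = pint I M h u x * k x"
proof -
  have "\<And>z. k (merge u (I - u) (x, z)) = k x" by (rule k) (simp add: merge_def)
  then show ?thesis unfolding pint_def by simp
qed

lemma pint_sq:
  fixes g :: "(nat \<Rightarrow> real) \<Rightarrow> real"
  assumes u: "u \<subseteq> I" and gm: "g \<in> borel_measurable (PiM I M)" and g2: "integrable (PiM I M) (\<lambda>x. (g x)\<^sup>2)"
  shows "AE x in PiM I M. (pint I M g u x)\<^sup>2 \<le> pint I M (\<lambda>x. (g x)\<^sup>2) u x"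
  using pint_fubini(1)[OF u g2]
proof eventually_elim
  case (elim x)
  have fu: "finite (I - u)" using finI by auto
  have "(\<lambda>z. g (merge u (I - u) (restrict x u, z))) \<in> borel_measurable (PiM (I - u) M)"
    using measurable_Pair2[OF merge_meas[OF u gm], of "restrict x u"] by (simp add: space_PiM spaceM)
  then have m: "(\<lambda>z. g (merge u (I - u) (x, z))) \<in> borel_measurable (PiM (I - u) M)" by simp
  show ?case unfolding pint_def
    by (rule jensen_sq[OF prob_PiM[OF fu] m]) (use elim in simp)
qed

lemma pint_L2:
  fixes g :: "(nat \<Rightarrow> real) \<Rightarrow> real"
  assumes u: "u \<subseteq> I" and gm: "g \<in> borel_measurable (PiM I M)" and g2: "integrable (PiM I M) (\<lambda>x. (g x)\<^sup>2)"
  shows "integrable (PiM I M) (\<lambda>x. (pint I M g u x)\<^sup>2)"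
proof (rule Bochner_Integration.integrable_bound[OF pint_fubini(2)[OF u g2]])
  show "(\<lambda>x. (pint I M g u x)\<^sup>2) \<in> borel_measurable (PiM I M)"
    using pint_meas[OF u gm] by measurable
  show "AE x in PiM I M. norm ((pint I M g u x)\<^sup>2) \<le> norm (pint I M (\<lambda>x. (g x)\<^sup>2) u x)"
    using pint_sq[OF u gm g2] by eventually_elim auto
qed

lemma pint_nested:
  fixes g :: "(nat \<Rightarrow> real) \<Rightarrow> real"
  assumes a: "a \<subseteq> I" and b: "b \<subseteq> I" and g: "integrable (PiM I M) g"
  shows "AE x in PiM I M. pint I M (pint I M g a) b x = pint I M g (a \<inter> b) x"
proof -
  have ab: "a \<inter> b \<subseteq> I" using a by auto
  show ?thesis using pint_fubini(1)[OF ab g]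
proof eventually_elim
  case (elim x)
  define c where "c = a \<inter> b"
  have gm: "g \<in> borel_measurable (PiM I M)" using g by auto
  have fin: "finite (a - b)" "finite (I - a)" "finite (I - b)" "finite (I - (a - b))"
    using finI a finite_subset by auto
  have dj: "(a - b) \<inter> (I - a) = {}" by auto
  have Ic: "I - c = (a - b) \<union> (I - a)" using a unfolding c_def by auto
  define G where "G w = g (merge c (I - c) (x, w))" for w
  define H where "H z1 = pint I M g a (merge (a - b) (I - (a - b)) (z1, x))" for z1
  have Gi: "integrable (PiM ((a - b) \<union> (I - a)) M) G"
    using elim unfolding G_def c_def Ic[unfolded c_def] by simp
  have rx: "restrict x (I - (a - b)) \<in> space (PiM (I - (a - b)) M)"
    by (simp add: space_PiM spaceM)
  have IU: "(a - b) \<union> (I - (a - b)) = I" using a by auto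
  have mm: "merge (a - b) (I - (a - b)) \<in> measurable (PiM (a - b) M \<Otimes>\<^sub>M PiM (I - (a - b)) M) (PiM I M)"
    using measurable_merge[of "a - b" "I - (a - b)" M] IU by simp
  have mz: "(\<lambda>z1. merge (a - b) (I - (a - b)) (z1, x)) \<in> measurable (PiM (a - b) M) (PiM I M)"
    using measurable_comp[OF measurable_Pair2'[OF rx] mm] by (simp add: comp_def)
  have Hm: "H \<in> borel_measurable (PiM (a - b) M)"
    unfolding H_def using measurable_comp[OF mz pint_meas[OF a gm]] by (simp add: comp_def)
  have "pint I M (pint I M g a) b x = (\<integral>z. pint I M g a (merge b (I - b) (x, z)) \<partial>PiM (I - b) M)"
    by (simp add: pint_def)
  also have "\<dots> = (\<integral>z. H (restrict z (a - b)) \<partial>PiM (I - b) M)"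
    unfolding H_def by (intro Bochner_Integration.integral_cong refl pint_local) (use a in \<open>auto simp: merge_def\<close>)
  also have "\<dots> = integral\<^sup>L (PiM (a - b) M) H"
    by (rule restr_integralK[OF fin(3) _ Hm]) (use a in auto)
  also have "\<dots> = (\<integral>z1. (\<integral>z'. G (merge (a - b) (I - a) (z1, z')) \<partial>PiM (I - a) M) \<partial>PiM (a - b) M)"
    unfolding H_def G_def pint_def
    by (intro Bochner_Integration.integral_cong refl arg_cong[where f=g]) (use a b in \<open>auto simp: merge_def fun_eq_iff c_def\<close>)
  also have "\<dots> = integral\<^sup>L (PiM ((a - b) \<union> (I - a)) M) G"
    by (rule product_integral_fold[OF dj fin(1,2) Gi, symmetric])
  also have "\<dots> = pint I M g c x"
    unfolding pint_def G_def Ic ..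
  finally show ?case unfolding c_def .
qed
qed

lemma pint_localconst:
  assumes w: "w \<subseteq> I" and f: "\<And>x x'. (\<And>i. i \<in> w \<Longrightarrow> x i = x' i) \<Longrightarrow> f x = f x'"
  shows "pint I M f w x = f x"
proof -
  have fu: "finite (I - w)" using finI by auto
  interpret Q: prob_space "PiM (I - w) M" by (rule prob_PiM[OF fu])
  have "\<And>z. f (merge w (I - w) (x, z)) = f x" by (rule f) (simp add: merge_def)
  then show ?thesis unfolding pint_def using Q.prob_space by simp
qed

lemma pint_diff_AE:
  fixes f g :: "(nat \<Rightarrow> real) \<Rightarrow> real"
  assumes w: "w \<subseteq> I" and f: "integrable (PiM I M) f" and g: "integrable (PiM I M) g"
  shows "AE x in PiM I M. pint I M (\<lambda>x. f x - g x) w x = pint I M f w x - pint I M g w x"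
  using pint_fubini(1)[OF w f] pint_fubini(1)[OF w g]
  by eventually_elim (simp add: pint_def)

lemma pint_sum_AE:
  fixes f :: "'b \<Rightarrow> (nat \<Rightarrow> real) \<Rightarrow> real"
  assumes w: "w \<subseteq> I" and V: "finite V" and f: "\<And>v. v \<in> V \<Longrightarrow> integrable (PiM I M) (f v)"
  shows "AE x in PiM I M. pint I M (\<lambda>x. \<Sum>v\<in>V. f v x) w x = (\<Sum>v\<in>V. pint I M (f v) w x)"
proof -
  have "AE x in PiM I M. \<forall>v\<in>V. integrable (PiM (I - w) M) (\<lambda>z. f v (merge w (I - w) (x, z)))"
    using V f pint_fubini(1)[OF w] by (intro eventually_ball_finite) auto
  then show ?thesis by eventually_elim (simp add: pint_def)
qed

end

locale anvy = anv +
  fixes y :: "(nat \<Rightarrow> real) \<Rightarrow> real" and A :: "nat set \<Rightarrow> (nat \<Rightarrow> real) \<Rightarrow> real"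
  assumes ym: "y \<in> borel_measurable (PiM I M)"
    and y2: "integrable (PiM I M) (\<lambda>x. (y x)\<^sup>2)"
    and Arec: "\<And>u x. u \<subseteq> I \<Longrightarrow> A u x = pint I M y u x - (\<Sum>v\<in>{v. v \<subset> u}. A v x)"
begin

lemma yi: "integrable (PiM I M) y"
  by (rule P.square_integrable_imp_integrable[OF ym y2])

lemma Afun: "u \<subseteq> I \<Longrightarrow> A u = (\<lambda>x. pint I M y u x - (\<Sum>v\<in>{v. v \<subset> u}. A v x))"
  using Arec by auto

lemma finsub: "finite {v. v \<subset> (u::nat set)}" if "u \<subseteq> I"
proof -
  have "finite u" using that finI finite_subset by auto
  then show ?thesis by (rule finite_subset[rotated, OF finite_Pow_iff[THEN iffD2]]) auto
qed

lemma A_sqi: "u \<subseteq> I \<Longrightarrow> sqi (PiM I M) (A u)"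
proof -
  assume u: "u \<subseteq> I"
  have "finite u" using u finI finite_subset by auto
  then show ?thesis using u
  proof (induction u rule: finite_psubset_induct)
    case (psubset u)
    have "sqi (PiM I M) (pint I M y u)"
      using pint_meas[OF psubset(3) ym] pint_L2[OF psubset(3) ym y2] by (simp add: sqi_def)
    moreover have "sqi (PiM I M) (\<lambda>x. \<Sum>v\<in>{v. v \<subset> u}. A v x)"
      using psubset by (intro sqi_sum finsub) auto
    ultimately show ?case by (subst Afun[OF psubset(3)]) (rule sqi_diff)
  qed
qed

lemma A_int: "u \<subseteq> I \<Longrightarrow> integrable (PiM I M) (A u)"
  using A_sqi P.square_integrable_imp_integrable unfolding sqi_def by blast

lemma A_local: "u \<subseteq> I \<Longrightarrow> (\<And>i. i \<in> u \<Longrightarrow> x i = x' i) \<Longrightarrow> A u x = A u x'"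
proof -
  assume u: "u \<subseteq> I" and ag: "\<And>i. i \<in> u \<Longrightarrow> x i = x' i"
  have "finite u" using u finI finite_subset by auto
  then show ?thesis using u ag
  proof (induction u rule: finite_psubset_induct)
    case (psubset u)
    have "pint I M y u x = pint I M y u x'" by (rule pint_local) (use psubset in auto)
    moreover have "(\<Sum>v\<in>{v. v \<subset> u}. A v x) = (\<Sum>v\<in>{v. v \<subset> u}. A v x')"
      by (rule sum.cong[OF refl]) (use psubset in auto)
    ultimately show ?case using Arec[OF psubset(3)] by simp
  qed
qed

lemma sum_split_i:
  assumes i: "i \<in> u" and fu: "finite u"
  shows "(\<Sum>v\<in>{v. v \<subset> u}. if i \<in> v then 0 else A v x) = A (u - {i}) x + (\<Sum>v\<in>{v. v \<subset> u - {i}}. A v x)"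
proof -
  have fin: "finite {v. v \<subset> u}" "finite {v. v \<subset> u - {i}}"
    using fu by (auto intro: finite_subset[rotated, OF finite_Pow_iff[THEN iffD2]])
  have "(\<Sum>v\<in>{v. v \<subset> u}. if i \<in> v then 0 else A v x) = (\<Sum>v\<in>{v. v \<subset> u}. if i \<notin> v then A v x else 0)"
    by (rule sum.cong) auto
  also have "\<dots> = (\<Sum>v\<in>{v \<in> {v. v \<subset> u}. i \<notin> v}. A v x)"
    using sum.inter_filter[OF fin(1), of "\<lambda>v. A v x" "\<lambda>v. i \<notin> v"] by simp
  also have "{v \<in> {v. v \<subset> u}. i \<notin> v} = insert (u - {i}) {v. v \<subset> u - {i}}"
    using i by auto
  also have "(\<Sum>v\<in>insert (u - {i}) {v. v \<subset> u - {i}}. A v x) = A (u - {i}) x + (\<Sum>v\<in>{v. v \<subset> u - {i}}. A v x)"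
    by (rule sum.insert[OF fin(2)]) auto
  finally show ?thesis .
qed

lemma A_zero: "u \<subseteq> I \<Longrightarrow> i \<in> u \<Longrightarrow> AE x in PiM I M. pint I M (A u) (I - {i}) x = 0"
proof -
  assume u: "u \<subseteq> I" and i: "i \<in> u"
  have "finite u" using u finI finite_subset by auto
  then show ?thesis using u i
  proof (induction u arbitrary: i rule: finite_psubset_induct)
    case (psubset u i)
    note u = psubset(3) and i = psubset(4)
    define W where "W = I - {i}"
    have W: "W \<subseteq> I" unfolding W_def by auto
    have fV: "finite {v. v \<subset> u}" by (rule finsub[OF u])
    have intS: "integrable (PiM I M) (\<lambda>x. \<Sum>v\<in>{v. v \<subset> u}. A v x)"
      using u by (intro Bochner_Integration.integrable_sum A_int) auto
    have e1: "AE x in PiM I M. pint I M (A u) W x = pint I M (pint I M y u) W x - pint I M (\<lambda>x. \<Sum>v\<in>{v. v \<subset> u}. A v x) W x"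
      by (subst Afun[OF u], rule pint_diff_AE[OF W pint_fubini(2)[OF u yi] intS])
    have e2: "AE x in PiM I M. pint I M (pint I M y u) W x = pint I M y (u \<inter> W) x"
      by (rule pint_nested[OF u W yi])
    have e3: "AE x in PiM I M. pint I M (\<lambda>x. \<Sum>v\<in>{v. v \<subset> u}. A v x) W x = (\<Sum>v\<in>{v. v \<subset> u}. pint I M (A v) W x)"
      using u by (intro pint_sum_AE[OF W fV] A_int) auto
    have e4: "AE x in PiM I M. \<forall>v\<in>{v. v \<subset> u \<and> i \<in> v}. pint I M (A v) W x = 0"
      unfolding W_def
      by (rule eventually_ball_finite) (use fV psubset(2) u in \<open>auto intro: finite_subset\<close>)
    show ?case unfolding W_def[symmetric] using e1 e2 e3 e4
    proof eventually_elim
      case (elim x)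
      have "(\<Sum>v\<in>{v. v \<subset> u}. pint I M (A v) W x) = (\<Sum>v\<in>{v. v \<subset> u}. if i \<in> v then 0 else A v x)"
      proof (rule sum.cong[OF refl])
        fix v assume v: "v \<in> {v. v \<subset> u}"
        show "pint I M (A v) W x = (if i \<in> v then 0 else A v x)"
        proof (cases "i \<in> v")
          case True then show ?thesis using elim(4) v by auto
        next
          case False
          then have "v \<subseteq> W" using v u unfolding W_def by auto
          then have "pint I M (A v) W x = A v x"
            using v u by (intro pint_localconst W A_local) auto
          then show ?thesis using False by simp
        qed
      qed
      also have "\<dots> = A (u - {i}) x + (\<Sum>v\<in>{v. v \<subset> u - {i}}. A v x)"
        by (rule sum_split_i[OF i \<open>finite u\<close>])
      also have "\<dots> = pint I M y (u \<inter> W) x"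
      proof -
        have "u \<inter> W = u - {i}" using u unfolding W_def by auto
        moreover have "u - {i} \<subseteq> I" using u by auto
        ultimately show ?thesis using Arec[of "u - {i}" x] by simp
      qed
      finally show ?case using elim(1,2,3) by simp
    qed
  qed
qed

lemma A_orth1:
  assumes u: "u \<subseteq> I" and w: "w \<subseteq> I" and i: "i \<in> u" "i \<notin> w"
  shows "integral\<^sup>L (PiM I M) (\<lambda>x. A u x * A w x) = 0"
proof -
  define W where "W = I - {i}"
  have W: "W \<subseteq> I" unfolding W_def by auto
  have wW: "w \<subseteq> W" using w i unfolding W_def by auto
  have loc: "\<And>x x'. (\<And>j. j \<in> W \<Longrightarrow> x j = x' j) \<Longrightarrow> A w x = A w x'"
    using wW by (intro A_local[OF w]) auto
  have int: "integrable (PiM I M) (\<lambda>x. A u x * A w x)"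
    by (rule sqi_prod[OF A_sqi[OF u] A_sqi[OF w]])
  have "integral\<^sup>L (PiM I M) (\<lambda>x. A u x * A w x) = integral\<^sup>L (PiM I M) (pint I M (\<lambda>x. A u x * A w x) W)"
    by (rule pint_fubini(3)[OF W int, symmetric])
  also have "\<dots> = integral\<^sup>L (PiM I M) (\<lambda>x. pint I M (A u) W x * A w x)"
    by (intro Bochner_Integration.integral_cong refl) (rule pint_pullout[OF loc])
  also have "\<dots> = integral\<^sup>L (PiM I M) (\<lambda>x. 0)"
  proof (rule integral_cong_AE)
    have "A u \<in> borel_measurable (PiM I M)" "A w \<in> borel_measurable (PiM I M)"
      using A_sqi[OF u] A_sqi[OF w] by (auto simp: sqi_def)
    then show "(\<lambda>x. pint I M (A u) W x * A w x) \<in> borel_measurable (PiM I M)"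
      using pint_meas[OF W] by measurable
    show "(\<lambda>x. 0::real) \<in> borel_measurable (PiM I M)" by simp
    show "AE x in PiM I M. pint I M (A u) W x * A w x = 0"
      using A_zero[OF u i(1)] unfolding W_def[symmetric] by eventually_elim simp
  qed
  finally show ?thesis by simp
qed

lemma A_orth:
  assumes u: "u \<subseteq> I" and w: "w \<subseteq> I" and ne: "u \<noteq> w"
  shows "integral\<^sup>L (PiM I M) (\<lambda>x. A u x * A w x) = 0"
proof -
  from ne obtain i where "(i \<in> u \<and> i \<notin> w) \<or> (i \<in> w \<and> i \<notin> u)" by blast
  then show ?thesis
  proof
    assume "i \<in> u \<and> i \<notin> w" then show ?thesis using A_orth1[OF u w] by blast
  next
    assume "i \<in> w \<and> i \<notin> u"
    then have "integral\<^sup>L (PiM I M) (\<lambda>x. A w x * A u x) = 0" using A_orth1[OF w u] by blast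
    moreover have "(\<lambda>x. A w x * A u x) = (\<lambda>x. A u x * A w x)" by (simp add: fun_eq_iff mult.commute)
    ultimately show ?thesis by simp
  qed
qed

lemma y_decomp:
  assumes x: "x \<in> space (PiM I M)"
  shows "y x = (\<Sum>u\<in>{u. u \<subseteq> I}. A u x)"
proof -
  have "pint I M y I x = y (merge I {} (x, \<lambda>_. undefined))"
    unfolding pint_def by (simp add: PiM_empty lebesgue_integral_count_space_finite)
  also have "merge I {} (x, \<lambda>_. undefined) = x"
    using x by (auto simp: merge_def space_PiM PiE_def extensional_def fun_eq_iff)
  finally have py: "pint I M y I x = y x" .
  have fin: "finite {v. v \<subset> I}" by (rule finsub) simp
  have "{u. u \<subseteq> I} = insert I {v. v \<subset> I}" by auto
  then have "(\<Sum>u\<in>{u. u \<subseteq> I}. A u x) = A I x + (\<Sum>v\<in>{v. v \<subset> I}. A v x)"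
    using fin by simp
  then show ?thesis using Arec[of I x] py by simp
qed

lemma main_loc:
  fixes c q :: real and S :: nat
  assumes vb: "\<And>u. u \<subseteq> I \<Longrightarrow> u \<noteq> {} \<Longrightarrow> integral\<^sup>L (PiM I M) (\<lambda>x. (A u x)\<^sup>2) \<le> c * q powr (- real (card u))"
  shows "integral\<^sup>L (PiM I M) (\<lambda>x. (y x - (\<Sum>u\<in>{u. u \<subseteq> I \<and> card u \<le> S}. A u x))\<^sup>2)
     \<le> (\<Sum>u\<in>{u. u \<subseteq> I \<and> \<not> card u \<le> S}. c * q powr (- real (card u)))"
proof -
  define L where "L = {u. u \<subseteq> I \<and> card u \<le> S}"
  define U where "U = {u. u \<subseteq> I \<and> \<not> card u \<le> S}"
  have finP: "finite {u. u \<subseteq> I}" using finI by simp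
  have fL: "finite L" and fU: "finite U" unfolding L_def U_def by (auto intro: finite_subset[OF _ finP])
  have UI: "\<And>u. u \<in> U \<Longrightarrow> u \<subseteq> I" unfolding U_def by auto
  have split: "{u. u \<subseteq> I} = L \<union> U" "L \<inter> U = {}" unfolding L_def U_def by auto
  have eq1: "\<And>x. x \<in> space (PiM I M) \<Longrightarrow> (y x - (\<Sum>u\<in>L. A u x))\<^sup>2 = (\<Sum>u\<in>U. \<Sum>w\<in>U. A u x * A w x)"
  proof -
    fix x assume x: "x \<in> space (PiM I M)"
    have "y x = (\<Sum>u\<in>L. A u x) + (\<Sum>u\<in>U. A u x)"
      using y_decomp[OF x] split fL fU by (simp add: sum.union_disjoint)
    then show "(y x - (\<Sum>u\<in>L. A u x))\<^sup>2 = (\<Sum>u\<in>U. \<Sum>w\<in>U. A u x * A w x)"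
      by (simp add: power2_eq_square sum_product)
  qed
  have "integral\<^sup>L (PiM I M) (\<lambda>x. (y x - (\<Sum>u\<in>L. A u x))\<^sup>2) = integral\<^sup>L (PiM I M) (\<lambda>x. \<Sum>u\<in>U. \<Sum>w\<in>U. A u x * A w x)"
    by (intro Bochner_Integration.integral_cong refl eq1)
  also have "\<dots> = (\<Sum>u\<in>U. \<Sum>w\<in>U. integral\<^sup>L (PiM I M) (\<lambda>x. A u x * A w x))"
    using UI sqi_prod[OF A_sqi A_sqi]
    by (simp add: Bochner_Integration.integral_sum Bochner_Integration.integrable_sum)
  also have "\<dots> = (\<Sum>u\<in>U. integral\<^sup>L (PiM I M) (\<lambda>x. (A u x)\<^sup>2))"
  proof (rule sum.cong[OF refl])
    fix u assume u: "u \<in> U"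
    have "(\<Sum>w\<in>U. integral\<^sup>L (PiM I M) (\<lambda>x. A u x * A w x)) = (\<Sum>w\<in>U. if w = u then integral\<^sup>L (PiM I M) (\<lambda>x. A u x * A u x) else 0)"
      by (rule sum.cong[OF refl]) (use u UI A_orth in auto)
    also have "\<dots> = integral\<^sup>L (PiM I M) (\<lambda>x. A u x * A u x)"
      using u fU by simp
    finally show "(\<Sum>w\<in>U. integral\<^sup>L (PiM I M) (\<lambda>x. A u x * A w x)) = integral\<^sup>L (PiM I M) (\<lambda>x. (A u x)\<^sup>2)"
      by (simp add: power2_eq_square)
  qed
  also have "\<dots> \<le> (\<Sum>u\<in>U. c * q powr (- real (card u)))"
  proof (rule sum_mono)
    fix u assume u: "u \<in> U"
    then have "u \<noteq> {}" unfolding U_def by auto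
    then show "integral\<^sup>L (PiM I M) (\<lambda>x. (A u x)\<^sup>2) \<le> c * q powr (- real (card u))"
      using vb UI u by blast
  qed
  finally show ?thesis unfolding L_def U_def .
qed

end
lemma comb_sum:
  fixes h :: "nat \<Rightarrow> real" and I :: "nat set"
  assumes fI: "finite I"
  shows "(\<Sum>u\<in>{u. u \<subseteq> I \<and> \<not> card u \<le> S}. h (card u)) = (\<Sum>s=S+1..card I. real (card I choose s) * h s)"
proof -
  define U where "U = {u. u \<subseteq> I \<and> \<not> card u \<le> S}"
  have fU: "finite U" unfolding U_def using fI by (auto intro: finite_subset[of _ "Pow I"])
  have im: "card ` U \<subseteq> {S+1..card I}" unfolding U_def using fI by (auto intro: card_mono)
  have "(\<Sum>u\<in>U. h (card u)) = (\<Sum>s\<in>{S+1..card I}. \<Sum>u\<in>{u. u \<in> U \<and> card u = s}. h (card u))"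
    by (rule sum.group[OF fU _ im, symmetric]) simp
  also have "\<dots> = (\<Sum>s\<in>{S+1..card I}. real (card I choose s) * h s)"
  proof (rule sum.cong[OF refl])
    fix s assume s: "s \<in> {S+1..card I}"
    have e: "{u. u \<in> U \<and> card u = s} = {B. B \<subseteq> I \<and> card B = s}" unfolding U_def using s by auto
    have "(\<Sum>u\<in>{u. u \<in> U \<and> card u = s}. h (card u)) = (\<Sum>u\<in>{B. B \<subseteq> I \<and> card B = s}. h s)"
      unfolding e by (rule sum.cong) auto
    also have "\<dots> = real (card I choose s) * h s" using n_subsets[OF fI, of s] by simp
    finally show "(\<Sum>u\<in>{u. u \<in> U \<and> card u = s}. h (card u)) = real (card I choose s) * h s" .
  qed
  finally show ?thesis unfolding U_def .
qed

theorem proposition1: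
  fixes N S :: nat and f :: "nat \<Rightarrow> real \<Rightarrow> real" and y :: "(nat \<Rightarrow> real) \<Rightarrow> real"
    and c q :: real
  defines "M \<equiv> (\<lambda>i. density lborel (f i))"
  defines "P \<equiv> PiM {1..N} M"
  assumes f_meas: "\<And>i. i \<in> {1..N} \<Longrightarrow> f i \<in> borel_measurable borel"
    and f_nonneg: "\<And>i t. i \<in> {1..N} \<Longrightarrow> 0 \<le> f i t"
    and f_int1: "\<And>i. i \<in> {1..N} \<Longrightarrow> integrable lborel (f i) \<and> integral\<^sup>L lborel (f i) = 1"
    and y_meas: "y \<in> borel_measurable P"
    and y_sq: "integrable P (\<lambda>x. (y x)\<^sup>2)"
    and c_pos: "c > 0" and q_gt: "q > 1"
    and var_bound: "\<And>u. u \<subseteq> {1..N} \<Longrightarrow> u \<noteq> {} \<Longrightarrow>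
        integral\<^sup>L P (\<lambda>x. (anova N M y u x)\<^sup>2) \<le> c * q powr (- real (card u))"
    and S_le: "S \<le> N"
  shows "integral\<^sup>L P (\<lambda>x. (y x - (\<Sum>u\<in>{u. u \<subseteq> {1..N} \<and> card u \<le> S}. anova N M y u x))\<^sup>2)
           \<le> c * (\<Sum>s=S+1..N. real (N choose s) * q powr (- real s))"
proof -
  define I where "I = {1..N}"
  define M' where "M' i = (if i \<in> I then M i else return lborel 0)" for i
  have PI: "PiM J M = PiM J M'" if "J \<subseteq> I" for J
    by (rule PiM_cong) (use that in \<open>auto simp: M'_def\<close>)
  have probM: "prob_space (M i)" if i: "i \<in> I" for i
  proof (rule prob_spaceI)
    have fi: "integrable lborel (f i)" "integral\<^sup>L lborel (f i) = 1" using f_int1 i unfolding I_def by auto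
    have fm: "f i \<in> borel_measurable lborel" using f_meas i unfolding I_def by simp
    have "emeasure (M i) (space (M i)) = (\<integral>\<^sup>+x. ennreal (f i x) \<partial>lborel)"
      unfolding M_def using fm by (simp add: emeasure_density)
    also have "\<dots> = ennreal (integral\<^sup>L lborel (f i))"
      by (rule nn_integral_eq_integral[OF fi(1)]) (use f_nonneg i in \<open>auto simp: I_def\<close>)
    finally show "emeasure (M i) (space (M i)) = 1" using fi(2) by simp
  qed
  have probM': "prob_space (M' i)" for i
    using probM by (auto simp: M'_def prob_space_return)
  have setsM': "sets (M' i) = sets borel" for i
    by (simp add: M'_def M_def)
  have pps: "product_prob_space M'"
    unfolding product_prob_space_def product_prob_space_axioms_def product_sigma_finite_def
    using probM' prob_space_imp_sigma_finite by blast
  interpret anv M' I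
    unfolding anv_def anv_axioms_def using pps setsM' by (simp add: I_def)
  have P': "P = PiM I M'" unfolding P_def I_def[symmetric] by (rule PI) simp
  interpret anvy M' I y "anova N M y"
  proof unfold_locales
    show "y \<in> borel_measurable (PiM I M')" using y_meas P' by simp
    show "integrable (PiM I M') (\<lambda>x. (y x)\<^sup>2)" using y_sq P' by simp
    fix u x assume u: "u \<subseteq> I"
    have fu: "finite u" using u finite_subset unfolding I_def by auto
    have "partial_int N M y u x = pint I M' y u x"
      unfolding partial_int_def pint_def I_def[symmetric] by (subst PI) auto
    then show "anova N M y u x = pint I M' y u x - (\<Sum>v\<in>{v. v \<subset> u}. anova N M y v x)"
      using fu by simp
  qed
  have "integral\<^sup>L P (\<lambda>x. (y x - (\<Sum>u\<in>{u. u \<subseteq> I \<and> card u \<le> S}. anova N M y u x))\<^sup>2)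
     \<le> (\<Sum>u\<in>{u. u \<subseteq> I \<and> \<not> card u \<le> S}. c * q powr (- real (card u)))"
    unfolding P' by (rule main_loc) (use var_bound P' in \<open>auto simp: I_def\<close>)
  also have "\<dots> = c * (\<Sum>u\<in>{u. u \<subseteq> I \<and> \<not> card u \<le> S}. q powr (- real (card u)))"
    by (simp add: sum_distrib_left)
  also have "(\<Sum>u\<in>{u. u \<subseteq> I \<and> \<not> card u \<le> S}. q powr (- real (card u))) = (\<Sum>s=S+1..N. real (N choose s) * q powr (- real s))"
    using comb_sum[where I=I and S=S and h="\<lambda>s. q powr (- real s)"] unfolding I_def by simp
  finally show ?thesis unfolding I_def .
qed

end
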